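(* Let $T:\mathcal P(\mathbb R^n)\to\mathcal P(\mathbb R^n)$ be $TA=\{y:\langle x,y\rangle\ge 1\ \forall x\in A\}$, let $\mathcal C=\{TK:K\subseteq\mathbb R^n\}$, and let $\mathcal S$ be the set of $K\in\mathcal C\setminus\{\emptyset,\mathbb R^n\}$ whose (unique) point closest to the origin is $e_n$. Identify $\mathbb R^n=\mathbb R^{n-1}\times\mathbb R$. For $K\in\mathcal S$ let $\varphi:\mathbb R^{n-1}\to(0,\infty]$ be $\varphi(x)=\min\{t:(x,t)\in K\}$ (with $\varphi(x)=+\infty$ if no such $t$ exists), and define \[ \tilde T\varphi(y)=\sup_{x\in\mathbb R^{n-1},\ \varphi(x)<\infty}\frac{1-\langle x,y\rangle}{\varphi(x)},\qquad y\in\mathbb R^{n-1}. \] Then $\mathrm{epi}(\varphi)=K$ and $TK=\mathrm{epi}(\tilde T\varphi)$. Moreover, the map $K\mapsto\varphi$ is a bijection between $\mathcal S$ and the class of lower semi-continuous convex functions $\varphi$ on $\mathbb R^{n-1}$ whose minimal value is $\varphi(0)=1$ and which satisfy $-1\le\mathcal L\varphi(y)\le 0$ for all $y\in\mathrm{dom}(\mathcal L\varphi)$.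
   Context: $e_n=(0,\dots,0,1)$. For $\varphi:\mathbb R^{n-1}\to(-\infty,\infty]$, $\mathrm{epi}(\varphi)=\{(x,t)\in\mathbb R^{n-1}\times\mathbb R: t\ge\varphi(x)\}$. $\mathcal L\varphi(y)=\sup_{x}(\langle x,y\rangle-\varphi(x))$ is the Legendre transform and $\mathrm{dom}(\mathcal L\varphi)=\{y:\mathcal L\varphi(y)<\infty\}$. *)

theory Defs
  imports "HOL-Analysis.Analysis"
begin

text \<open>R^n is identified with R^(n-1) x R, realised as the product type 'a \<times> real,
  where 'a is a Euclidean space playing the role of R^(n-1).\<close>

definition en :: "'a::euclidean_space \<times> real" where
  "en = (0, 1)"

definition polarT :: "('a::euclidean_space \<times> real) set \<Rightarrow> ('a \<times> real) set" where
  "polarT A = {y. \<forall>x\<in>A. inner x y \<ge> 1}"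

definition classC :: "('a::euclidean_space \<times> real) set set" where
  "classC = range polarT"

definition classS :: "('a::euclidean_space \<times> real) set set" where
  "classS = {K \<in> classC. K \<noteq> {} \<and> K \<noteq> UNIV \<and> en \<in> K \<and> (\<forall>z\<in>K. norm (en::'a \<times> real) \<le> norm z)}"

text \<open>phi K x = min {t. (x,t) \<in> K}, and +\<infinity> if that set is empty (Inf of empty ereal set).\<close>
definition phiK :: "('a::euclidean_space \<times> real) set \<Rightarrow> 'a \<Rightarrow> ereal" where
  "phiK K x = (INF t\<in>{t. (x, t) \<in> K}. ereal t)"

definition epi :: "('a \<Rightarrow> ereal) \<Rightarrow> ('a \<times> real) set" where
  "epi \<phi> = {(x, t). \<phi> x \<le> ereal t}"

definition Ttilde :: "('a::euclidean_space \<Rightarrow> ereal) \<Rightarrow> 'a \<Rightarrow> ereal" where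
  "Ttilde \<phi> y = (SUP x\<in>{x. \<phi> x < \<infinity>}. ereal (1 - inner x y) / \<phi> x)"

definition legendre :: "('a::euclidean_space \<Rightarrow> ereal) \<Rightarrow> 'a \<Rightarrow> ereal" where
  "legendre \<phi> y = (SUP x. ereal (inner x y) - \<phi> x)"

definition ldom :: "('a \<Rightarrow> ereal) \<Rightarrow> 'a set" where
  "ldom f = {y. f y < \<infinity>}"

definition lsc :: "('a::topological_space \<Rightarrow> ereal) \<Rightarrow> bool" where
  "lsc \<phi> \<longleftrightarrow> (\<forall>x c. c < \<phi> x \<longrightarrow> (\<forall>\<^sub>F z in nhds x. c < \<phi> z))"

definition convex_fun :: "('a::euclidean_space \<Rightarrow> ereal) \<Rightarrow> bool" where
  "convex_fun \<phi> \<longleftrightarrow> (\<forall>x. \<phi> x \<noteq> -\<infinity>) \<and> convex (epi \<phi>)"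

definition classF :: "('a::euclidean_space \<Rightarrow> ereal) set" where
  "classF = {\<phi>. lsc \<phi> \<and> convex_fun \<phi> \<and> \<phi> 0 = 1 \<and> (\<forall>x. \<phi> 0 \<le> \<phi> x)
             \<and> (\<forall>y\<in>ldom (legendre \<phi>). -1 \<le> legendre \<phi> y \<and> legendre \<phi> y \<le> 0)}"

end

theory Submission
  imports Defs
begin

lemma polarT_eq: "polarT A = (\<Inter>x\<in>A. {y. inner x y \<ge> 1})"
  unfolding polarT_def by auto

lemma polarT_closed: "closed (polarT A)"
  unfolding polarT_eq by (intro closed_INT ballI closed_halfspace_ge)

lemma polarT_convex: "convex (polarT A)"
  unfolding polarT_eq by (intro convex_INT ballI convex_halfspace_ge)

lemma polarT_scale:
  assumes "y \<in> polarT A" "l \<ge> 1" shows "l *\<^sub>R y \<in> polarT A"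
proof -
  { fix x assume "x \<in> A"
    hence "inner x y \<ge> 1" using assms unfolding polarT_def by auto
    hence "1 \<le> l * inner x y" using assms(2)
      by (metis dual_order.trans mult_le_cancel_right1 mult_left_mono zero_le_one mult.commute linorder_le_cases order.trans) 
  }
  thus ?thesis unfolding polarT_def by auto
qed

lemma polar_polar_sub: "K \<subseteq> polarT (polarT K)"
  unfolding polarT_def by (auto simp: inner_commute)

lemma classS_props:
  fixes K :: "('a::euclidean_space \<times> real) set"
  assumes "K \<in> classS"
  shows "closed K" "convex K" "(0,1) \<in> K"
    "\<And>x t. (x,t) \<in> K \<Longrightarrow> 1 \<le> t"
    "\<And>x t s. (x,t) \<in> K \<Longrightarrow> t \<le> s \<Longrightarrow> (x,s) \<in> K"
    "\<And>x t l. (x,t) \<in> K \<Longrightarrow> 1 \<le> l \<Longrightarrow> (l *\<^sub>R x, l * t) \<in> K"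
proof -
  from assms obtain A where KA: "K = polarT A" and en: "en \<in> K"
    and mn: "\<forall>z\<in>K. norm (en::'a \<times> real) \<le> norm z"
    unfolding classS_def classC_def by auto
  show cl: "closed K" using KA polarT_closed by simp
  show cv: "convex K" using KA polarT_convex by simp
  show "(0,1) \<in> K" using en by (simp add: en_def)
  show "1 \<le> t" if "(x,t) \<in> K" for x t
  proof -
    have "\<forall>z\<in>K. dist 0 (en::'a \<times> real) \<le> dist 0 z" using mn by (simp add: dist_norm)
    from any_closest_point_dot[OF cv cl en that this]
    show ?thesis by (simp add: en_def)
  qed
  show "(x,s) \<in> K" if "(x,t) \<in> K" "t \<le> s" for x t s
  proof -
    { fix a assume a: "a \<in> A"
      obtain a1 a2 where aa: "a = (a1,a2)" by (cases a)
      have "1 \<le> inner a en" using en a KA unfolding polarT_def by auto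
      hence a2: "1 \<le> a2" by (simp add: aa en_def)
      have "1 \<le> inner a1 x + a2 * t" using that a KA aa unfolding polarT_def by auto
      moreover have "a2 * t \<le> a2 * s" using a2 that(2) by (simp add: mult_left_mono)
      ultimately have "1 \<le> inner a (x,s)" by (simp add: aa)
    }
    thus ?thesis using KA unfolding polarT_def by auto
  qed
  show "(l *\<^sub>R x, l * t) \<in> K" if "(x,t) \<in> K" "1 \<le> l" for x t l
    using polarT_scale[of "(x,t)" A l] that KA by simp
qed

lemma phiK_epi:
  fixes K :: "('a::euclidean_space \<times> real) set"
  assumes cl: "closed K" and lb: "\<And>x t. (x,t) \<in> K \<Longrightarrow> 1 \<le> t"
    and up: "\<And>x t s. (x,t) \<in> K \<Longrightarrow> t \<le> s \<Longrightarrow> (x,s) \<in> K"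
  shows "epi (phiK K) = K" "\<And>x. 1 \<le> phiK K x"
proof -
  show "1 \<le> phiK K x" for x
    unfolding phiK_def by (rule INF_greatest) (use lb in auto)
  show "epi (phiK K) = K"
  proof (rule set_eqI, clarify)
    fix x t
    show "((x,t) \<in> epi (phiK K)) = ((x,t) \<in> K)"
    proof
      assume "(x,t) \<in> K" thus "(x,t) \<in> epi (phiK K)"
        unfolding epi_def phiK_def by (auto intro: INF_lower)
    next
      assume "(x,t) \<in> epi (phiK K)"
      hence le: "(INF s\<in>{s. (x,s) \<in> K}. ereal s) \<le> ereal t" unfolding epi_def phiK_def by auto
      let ?S = "{s. (x,s) \<in> K}"
      have ne: "?S \<noteq> {}"
      proof
        assume e: "?S = {}"
        have "(INF s\<in>?S. ereal s) = \<infinity>" unfolding e by (simp add: top_ereal_def)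
        with le show False by simp
      qed
      have bdd: "bdd_below ?S" by (rule bdd_belowI[of _ 1]) (simp add: lb)
      have "?S = (\<lambda>s. (x,s)) -` K" by auto
      moreover have "closed ((\<lambda>s. (x,s)) -` K)"
        by (rule continuous_closed_vimage[OF cl]) (intro continuous_intros)
      ultimately have clS: "closed ?S" by simp
      have "ereal (Inf ?S) \<le> ereal t" using le ereal_Inf'[OF bdd ne] by simp
      hence it: "Inf ?S \<le> t" by simp
      have "Inf ?S \<in> ?S" using closed_contains_Inf[OF ne bdd clS] .
      hence "(x, Inf ?S) \<in> K" by simp
      from up[OF this it] show "(x,t) \<in> K" .
    qed
  qed
qed


lemma phiK_of_epi:
  assumes "\<And>x. \<phi> x \<noteq> -\<infinity>"
  shows "phiK (epi \<phi>) = \<phi>"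
proof
  fix x
  show "phiK (epi \<phi>) x = \<phi> x"
  proof (cases "\<phi> x")
    case (real r)
    show ?thesis unfolding phiK_def epi_def
    proof (rule antisym)
      show "(INF t\<in>{t. (x, t) \<in> {(x, t). \<phi> x \<le> ereal t}}. ereal t) \<le> \<phi> x"
        using real by (intro INF_lower2[of r]) auto
      show "\<phi> x \<le> (INF t\<in>{t. (x, t) \<in> {(x, t). \<phi> x \<le> ereal t}}. ereal t)"
        by (rule INF_greatest) auto
    qed
  next
    case PInf
    thus ?thesis unfolding phiK_def epi_def by (simp add: top_ereal_def)
  next
    case MInf thus ?thesis using assms by simp
  qed
qed

lemma lsc_of_closed_epi:
  fixes \<phi> :: "'a::euclidean_space \<Rightarrow> ereal"
  assumes cl: "closed (epi \<phi>)" and ge: "\<And>x. 1 \<le> \<phi> x"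
  shows "lsc \<phi>"
  unfolding lsc_def
proof (intro allI impI)
  fix x c assume c: "c < \<phi> x"
  show "\<forall>\<^sub>F z in nhds x. c < \<phi> z"
  proof (cases "c < 1")
    case True thus ?thesis using ge by (intro always_eventually allI) (auto intro: order.strict_trans2)
  next
    case False
    then obtain r where r: "c = ereal r" using c by (cases c) auto
    let ?U = "- ((\<lambda>z. (z,r)) -` epi \<phi>)"
    have "closed ((\<lambda>z. (z,r)) -` epi \<phi>)"
      by (rule continuous_closed_vimage[OF cl]) (intro continuous_intros)
    hence "open ?U" by auto
    moreover have "x \<in> ?U" using c r by (auto simp: epi_def)
    moreover have "\<forall>z\<in>?U. c < \<phi> z" using r by (auto simp: epi_def)
    ultimately show ?thesis by (auto simp: eventually_nhds)
  qed
qed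

lemma closed_epi_of_lsc:
  fixes \<phi> :: "'a::euclidean_space \<Rightarrow> ereal"
  assumes "lsc \<phi>"
  shows "closed (epi \<phi>)"
proof -
  have "open (- epi \<phi>)"
  proof (rule open_subopen[THEN iffD2], rule ballI)
    fix p assume "p \<in> - epi \<phi>"
    then obtain x t where p: "p = (x,t)" and lt: "ereal t < \<phi> x" by (cases p) (auto simp: epi_def)
    obtain c where c: "ereal t < ereal c" "ereal c < \<phi> x" using ereal_dense2[OF lt] by auto
    have "\<forall>\<^sub>F z in nhds x. ereal c < \<phi> z" using assms c(2) unfolding lsc_def by auto
    then obtain U where U: "open U" "x \<in> U" "\<forall>z\<in>U. ereal c < \<phi> z" by (auto simp: eventually_nhds)
    have "open (U \<times> {..<c})" using U(1) by (intro open_Times) auto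
    moreover have "p \<in> U \<times> {..<c}" using p U c by auto
    moreover have "U \<times> {..<c} \<subseteq> - epi \<phi>"
    proof clarify
      fix a b assume ab: "a \<in> U" "b < c" "(a,b) \<in> epi \<phi>"
      have "ereal b < ereal c" using ab(2) by simp
      also have "\<dots> < \<phi> a" using U(3) ab(1) by auto
      finally have "\<not> \<phi> a \<le> ereal b" by (simp add: not_le)
      thus False using ab(3) unfolding epi_def by simp
    qed
    ultimately show "\<exists>T. open T \<and> p \<in> T \<and> T \<subseteq> - epi \<phi>" by blast
  qed
  thus ?thesis by (simp add: closed_def)
qed


lemma ereal_fin:
  assumes "1 \<le> (v::ereal)" "v < \<infinity>"
  obtains m where "v = ereal m" "1 \<le> m"
  using assms by (cases v) auto

lemma ttilde_lemma:
  fixes \<phi> :: "'a::euclidean_space \<Rightarrow> ereal"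
  assumes ge: "\<And>x. 1 \<le> \<phi> x" and phi0: "\<phi> 0 = 1"
  shows "polarT (epi \<phi>) = epi (Ttilde \<phi>)"
proof (rule set_eqI)
  fix p :: "'a \<times> real"
  obtain w s where p: "p = (w,s)" by (cases p)
  have divr: "ereal (1 - inner x w) / \<phi> x = ereal ((1 - inner x w) / m)"
    if "\<phi> x = ereal m" "1 \<le> m" for x m
    using that by simp
  have "p \<in> polarT (epi \<phi>) \<longleftrightarrow> (\<forall>x t. \<phi> x \<le> ereal t \<longrightarrow> 1 \<le> inner x w + t * s)"
    unfolding polarT_def epi_def p by (auto simp: inner_commute)
  also have "\<dots> \<longleftrightarrow> (\<forall>x. \<phi> x < \<infinity> \<longrightarrow> ereal (1 - inner x w) / \<phi> x \<le> ereal s)"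
  proof
    assume H: "\<forall>x t. \<phi> x \<le> ereal t \<longrightarrow> 1 \<le> inner x w + t * s"
    show "\<forall>x. \<phi> x < \<infinity> \<longrightarrow> ereal (1 - inner x w) / \<phi> x \<le> ereal s"
    proof (intro allI impI)
      fix x assume "\<phi> x < \<infinity>"
      then obtain m where m: "\<phi> x = ereal m" "1 \<le> m" using ge ereal_fin by blast
      have "1 \<le> inner x w + m * s" using H m by auto
      hence "(1 - inner x w) / m \<le> s" using m(2) by (simp add: divide_le_eq mult.commute)
      thus "ereal (1 - inner x w) / \<phi> x \<le> ereal s" using divr[OF m] by simp
    qed
  next
    assume H: "\<forall>x. \<phi> x < \<infinity> \<longrightarrow> ereal (1 - inner x w) / \<phi> x \<le> ereal s"
    have "\<phi> 0 < \<infinity>" using phi0 by simp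
    hence "ereal (1 - inner 0 w) / \<phi> 0 \<le> ereal s" using H by blast
    moreover have "ereal (1 - inner 0 w) / \<phi> 0 = ereal 1" using divr[of 0 1] phi0 by simp
    ultimately have s1: "1 \<le> s" by simp
    show "\<forall>x t. \<phi> x \<le> ereal t \<longrightarrow> 1 \<le> inner x w + t * s"
    proof (intro allI impI)
      fix x t assume xt: "\<phi> x \<le> ereal t"
      hence "\<phi> x < \<infinity>" using xt by (cases "\<phi> x") auto
      then obtain m where m: "\<phi> x = ereal m" "1 \<le> m" using ge ereal_fin by blast
      have mt: "m \<le> t" using xt m by simp
      have "ereal ((1 - inner x w) / m) \<le> ereal s" using H[rule_format, of x] m divr[OF m] by simp
      hence "(1 - inner x w) / m \<le> s" by simp
      hence "1 - inner x w \<le> m * s" using m(2) by (simp add: divide_le_eq mult.commute)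
      moreover have "m * s \<le> t * s" using mt s1 by (simp add: mult_right_mono)
      ultimately show "1 \<le> inner x w + t * s" by linarith
    qed
  qed
  also have "\<dots> \<longleftrightarrow> p \<in> epi (Ttilde \<phi>)"
    unfolding epi_def p Ttilde_def by (auto simp: SUP_le_iff)
  finally show "p \<in> polarT (epi \<phi>) \<longleftrightarrow> p \<in> epi (Ttilde \<phi>)" .
qed


lemma legendre_bounds:
  fixes \<phi> :: "'a::euclidean_space \<Rightarrow> ereal"
  assumes ge: "\<And>x. 1 \<le> \<phi> x" and phi0: "\<phi> 0 = 1"
    and sc: "\<And>x m l. \<phi> x = ereal m \<Longrightarrow> 1 \<le> l \<Longrightarrow> \<phi> (l *\<^sub>R x) \<le> ereal (l * m)"
    and y: "legendre \<phi> y < \<infinity>"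
  shows "-1 \<le> legendre \<phi> y \<and> legendre \<phi> y \<le> 0"
proof
  show "-1 \<le> legendre \<phi> y"
    unfolding legendre_def by (rule SUP_upper2[of 0]) (simp_all add: phi0 flip: zero_ereal_def)
  show "legendre \<phi> y \<le> 0"
  proof (rule ccontr)
    assume "\<not> legendre \<phi> y \<le> 0"
    hence pos: "0 < legendre \<phi> y" by simp
    then obtain x where x: "0 < ereal (inner x y) - \<phi> x"
      unfolding legendre_def by (auto simp: less_SUP_iff)
    have "\<phi> x < \<infinity>" using x by (cases "\<phi> x") auto
    then obtain m where m: "\<phi> x = ereal m" "1 \<le> m" using ge ereal_fin by blast
    define d where "d = inner x y - m"
    have d: "0 < d" using x m by (simp add: d_def)
    obtain B where B: "legendre \<phi> y = ereal B" using pos y by (cases "legendre \<phi> y") auto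
    define l where "l = (\<bar>B\<bar> + 1) / d + 1"
    have l1: "1 \<le> l" using d by (simp add: l_def)
    have ld: "l * d = \<bar>B\<bar> + 1 + d" using d by (simp add: l_def field_simps)
    have le: "\<phi> (l *\<^sub>R x) \<le> ereal (l * m)" using sc[OF m(1) l1] .
    hence "\<phi> (l *\<^sub>R x) < \<infinity>" by (cases "\<phi> (l *\<^sub>R x)") auto
    then obtain r where r: "\<phi> (l *\<^sub>R x) = ereal r" using ge ereal_fin by blast
    have rl: "r \<le> l * m" using le r by simp
    have "ereal (inner (l *\<^sub>R x) y) - \<phi> (l *\<^sub>R x) \<le> legendre \<phi> y"
      unfolding legendre_def by (rule SUP_upper) simp
    hence "l * inner x y - r \<le> B" using r B by simp
    moreover have "l * inner x y - r \<ge> l * d" using rl by (simp add: d_def right_diff_distrib)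
    ultimately show False using ld d abs_ge_self[of B] by linarith
  qed
qed


lemma sep_nonvert:
  fixes K :: "('a::euclidean_space \<times> real) set"
  assumes cl: "closed K" and cv: "convex K"
    and lb: "\<And>u t. (u,t) \<in> K \<Longrightarrow> 1 \<le> t"
    and vert: "\<And>t. 1 \<le> t \<Longrightarrow> (0,t) \<in> K"
    and z: "(z1,z2) \<notin> K"
  shows "\<exists>a b. inner a z1 + z2 < b \<and> (\<forall>u t. (u,t) \<in> K \<longrightarrow> b \<le> inner a u + t)"
proof -
  obtain N b0 where N: "inner N (z1,z2) < b0" "\<forall>k\<in>K. b0 < inner N k"
    using separating_hyperplane_closed_point[OF cv cl z] by blast
  obtain A \<beta> where Nab: "N = (A,\<beta>)" by (cases N)
  have beta: "0 \<le> \<beta>"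
  proof (rule ccontr)
    assume "\<not> 0 \<le> \<beta>"
    hence bn: "\<beta> < 0" by simp
    define t where "t = 1 + \<bar>b0\<bar> / (- \<beta>)"
    have t1: "1 \<le> t" using bn by (simp add: t_def divide_nonneg_neg)
    have "b0 < inner N (0,t)" using N(2) vert[OF t1] by blast
    hence "b0 < \<beta> * t" by (simp add: Nab)
    moreover have "\<beta> * t = \<beta> - \<bar>b0\<bar>" using bn by (simp add: t_def field_simps)
    ultimately show False using bn by linarith
  qed
  define g where "g = b0 - inner N (z1,z2)"
  have g: "0 < g" using N(1) by (simp add: g_def)
  define \<epsilon> where "\<epsilon> = g / (\<bar>z2\<bar> + 2)"
  have eps: "0 < \<epsilon>" using g by (simp add: \<epsilon>_def)
  have eps2: "\<epsilon> * (\<bar>z2\<bar> + 2) = g" by (simp add: \<epsilon>_def)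
  define \<beta>' where "\<beta>' = \<beta> + \<epsilon>"
  have bp: "0 < \<beta>'" using beta eps by (simp add: \<beta>'_def)
  define a where "a = (1/\<beta>') *\<^sub>R A"
  define b where "b = (b0 + \<epsilon>) / \<beta>'"
  have "inner a z1 + z2 < b"
  proof -
    have e1: "\<epsilon> * z2 \<le> \<epsilon> * \<bar>z2\<bar>" by (rule mult_left_mono) (simp_all add: eps less_imp_le)
    have e2: "inner N (z1,z2) = inner A z1 + \<beta> * z2" by (simp add: Nab)
    have e3: "\<beta>' * z2 = \<beta> * z2 + \<epsilon> * z2" by (simp add: \<beta>'_def distrib_right)
    have e4: "\<epsilon> * \<bar>z2\<bar> + 2 * \<epsilon> = g" using eps2 by (simp add: algebra_simps)
    have "inner A z1 + \<beta>' * z2 < b0 + \<epsilon>"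
      using e1 e2 e3 e4 eps g_def by linarith
    hence "(inner A z1 + \<beta>' * z2) / \<beta>' < (b0 + \<epsilon>) / \<beta>'" using bp by (simp add: divide_strict_right_mono)
    thus ?thesis using bp by (simp add: a_def b_def add_divide_distrib)
  qed
  moreover have "b \<le> inner a u + t" if ut: "(u,t) \<in> K" for u t
  proof -
    have "b0 < inner A u + \<beta> * t" using N(2) ut by (auto simp: Nab)
    moreover have "\<epsilon> \<le> \<epsilon> * t" using lb[OF ut] eps by simp
    ultimately have "b0 + \<epsilon> \<le> inner A u + \<beta>' * t" by (simp add: \<beta>'_def algebra_simps)
    hence "(b0 + \<epsilon>) / \<beta>' \<le> (inner A u + \<beta>' * t) / \<beta>'" using bp by (simp add: divide_right_mono)
    thus ?thesis using bp by (simp add: a_def b_def add_divide_distrib)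
  qed
  ultimately show ?thesis by blast
qed


lemma classF_to_classS:
  fixes \<phi> :: "'a::euclidean_space \<Rightarrow> ereal"
  assumes F: "\<phi> \<in> classF"
  shows "epi \<phi> \<in> classS"
proof -
  let ?K = "epi \<phi>"
  have lsc: "lsc \<phi>" and cf: "convex_fun \<phi>" and phi0: "\<phi> 0 = 1" and mn: "\<And>x. \<phi> 0 \<le> \<phi> x"
    and leg: "\<And>y. y \<in> ldom (legendre \<phi>) \<Longrightarrow> -1 \<le> legendre \<phi> y \<and> legendre \<phi> y \<le> 0"
    using F unfolding classF_def by auto
  have ge: "1 \<le> \<phi> x" for x using mn[of x] phi0 by simp
  have cl: "closed ?K" using closed_epi_of_lsc[OF lsc] .
  have cv: "convex ?K" using cf unfolding convex_fun_def by simp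
  have lb: "1 \<le> t" if "(u,t) \<in> ?K" for u t
  proof -
    have "1 \<le> \<phi> u" by (rule ge)
    also have "\<phi> u \<le> ereal t" using that by (simp add: epi_def)
    finally show ?thesis by simp
  qed
  have vert: "(0,t) \<in> ?K" if "1 \<le> t" for t using that phi0 by (simp add: epi_def)
  have fin: "\<exists>r. \<phi> u = ereal r \<and> r \<le> t" if "(u,t) \<in> ?K" for u t
  proof -
    have le: "\<phi> u \<le> ereal t" using that by (simp add: epi_def)
    hence "\<phi> u < \<infinity>" by (cases "\<phi> u") auto
    then obtain r where "\<phi> u = ereal r" using ge ereal_fin by blast
    thus ?thesis using le by simp
  qed
  have dd: "polarT (polarT ?K) \<subseteq> ?K"
  proof
    fix z assume zin: "z \<in> polarT (polarT ?K)"
    show "z \<in> ?K"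
    proof (rule ccontr)
      assume zn: "z \<notin> ?K"
      obtain z1 z2 where zz: "z = (z1,z2)" by (cases z)
      have "\<exists>a b. inner a z1 + z2 < b \<and> (\<forall>u t. (u,t) \<in> ?K \<longrightarrow> b \<le> inner a u + t)"
        apply (rule sep_nonvert[OF cl cv])
          apply (rule lb, assumption)
         apply (rule vert, assumption)
        using zn zz apply simp
        done
      then obtain a b where ab: "inner a z1 + z2 < b" "\<forall>u t. (u,t) \<in> ?K \<longrightarrow> b \<le> inner a u + t"
        by blast
      have "legendre \<phi> (-a) \<le> ereal (-b)"
        unfolding legendre_def
      proof (rule SUP_least)
        fix u
        show "ereal (inner u (-a)) - \<phi> u \<le> ereal (-b)"
        proof (cases "\<phi> u")
          case (real r)
          hence "(u,r) \<in> ?K" by (simp add: epi_def)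
          hence "b \<le> inner a u + r" using ab(2) by blast
          thus ?thesis using real by (simp add: inner_commute)
        next
          case PInf thus ?thesis by simp
        next
          case MInf thus ?thesis using ge[of u] by simp
        qed
      qed
      hence "-a \<in> ldom (legendre \<phi>)" unfolding ldom_def by (auto simp: le_less_trans)
      hence lc: "-1 \<le> legendre \<phi> (-a)" "legendre \<phi> (-a) \<le> 0" using leg by auto
      then obtain c where c: "legendre \<phi> (-a) = ereal c" "c \<le> 0"
        using \<open>legendre \<phi> (-a) \<le> ereal (-b)\<close> by (cases "legendre \<phi> (-a)") auto
      have cb: "c \<le> -b" using c \<open>legendre \<phi> (-a) \<le> ereal (-b)\<close> by simp
      define d where "d = -c"
      have d0: "0 \<le> d" using c by (simp add: d_def)
      have Kd: "d \<le> inner a u + t" if ut: "(u,t) \<in> ?K" for u t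
      proof -
        obtain r where r: "\<phi> u = ereal r" "r \<le> t" using fin[OF ut] by blast
        have "ereal (inner u (-a)) - \<phi> u \<le> legendre \<phi> (-a)"
          unfolding legendre_def by (rule SUP_upper) simp
        hence "- inner u a - r \<le> c" using r c by simp
        thus ?thesis using r(2) by (simp add: d_def inner_commute)
      qed
      have zd: "inner a z1 + z2 < d" using ab(1) cb by (simp add: d_def)
      define g where "g = d - (inner a z1 + z2)"
      have g: "0 < g" using zd by (simp add: g_def)
      define \<delta> where "\<delta> = g / (\<bar>z2\<bar> + 2)"
      have dl: "0 < \<delta>" using g by (simp add: \<delta>_def)
      have dl3: "\<delta> * (\<bar>z2\<bar> + 2) = g" by (simp add: \<delta>_def)
      hence dl2: "\<delta> * \<bar>z2\<bar> + 2 * \<delta> = g" by (simp add: algebra_simps)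
      have e1: "\<delta> * z2 \<le> \<delta> * \<bar>z2\<bar>" by (rule mult_left_mono) (simp_all add: dl less_imp_le)
      define D where "D = d + \<delta>"
      have D: "0 < D" using d0 dl by (simp add: D_def)
      define w where "w = ((1/D) *\<^sub>R a, (1 + \<delta>) / D)"
      have iw: "inner (u,t) w = (inner a u + t + \<delta> * t) / D" for u t
        by (simp add: w_def inner_commute add_divide_distrib field_simps)
      have "w \<in> polarT ?K"
        unfolding polarT_def
      proof (safe)
        fix u t assume ut: "(u,t) \<in> ?K"
        have "\<delta> \<le> \<delta> * t" using lb[OF ut] dl by simp
        hence "D \<le> inner a u + t + \<delta> * t" using Kd[OF ut] by (simp add: D_def)
        thus "1 \<le> inner (u,t) w" using D by (simp add: iw le_divide_eq)
      qed
      hence "1 \<le> inner w z" using zin unfolding polarT_def by blast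
      moreover have "inner a z1 + z2 + \<delta> * z2 < D" using e1 dl2 dl g_def unfolding D_def by linarith
      hence "inner z w < 1" using D by (simp add: zz iw divide_less_eq)
      ultimately show False by (simp add: inner_commute)
    qed
  qed
  have KK: "?K = polarT (polarT ?K)" using dd polar_polar_sub by blast
  have inC: "?K \<in> classC" unfolding classC_def using KK by blast
  have en: "en \<in> ?K" using phi0 by (simp add: en_def epi_def)
  have ne: "?K \<noteq> UNIV"
  proof
    assume "?K = UNIV"
    hence "(0,0) \<in> ?K" by simp
    thus False using lb by fastforce
  qed
  have nrm: "norm (en::'a \<times> real) \<le> norm z" if "z \<in> ?K" for z
  proof -
    obtain u t where z: "z = (u,t)" by (cases z)
    have "1 \<le> t" using lb that z by blast
    hence "1 \<le> norm t" by simp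
    also have "\<dots> \<le> norm z" using norm_snd_le[of t u] z by simp
    finally show ?thesis by (simp add: en_def)
  qed
  show ?thesis unfolding classS_def using inC en ne nrm by auto
qed


lemma classS_to_classF:
  fixes K :: "('a::euclidean_space \<times> real) set"
  assumes S: "K \<in> classS"
  shows "epi (phiK K) = K \<and> polarT K = epi (Ttilde (phiK K)) \<and> phiK K \<in> classF"
proof -
  note P = classS_props[OF S]
  let ?\<phi> = "phiK K"
  have E: "epi ?\<phi> = K" and ge: "\<And>x. 1 \<le> ?\<phi> x"
    using phiK_epi[OF P(1) P(4) P(5)] by auto
  have "(0,1) \<in> epi ?\<phi>" using E P(3) by simp
  hence "?\<phi> 0 \<le> ereal 1" by (simp add: epi_def)
  hence "?\<phi> 0 \<le> 1" by (simp only: one_ereal_def)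
  hence phi0: "?\<phi> 0 = 1" using ge[of 0] by simp
  have T: "polarT K = epi (Ttilde ?\<phi>)" using ttilde_lemma[of ?\<phi>, OF ge phi0] E by simp
  have lsc: "lsc ?\<phi>" using lsc_of_closed_epi[of ?\<phi>] E P(1) ge by simp
  have cf: "convex_fun ?\<phi>" unfolding convex_fun_def
  proof
    show "\<forall>x. ?\<phi> x \<noteq> - \<infinity>"
    proof
      fix x show "?\<phi> x \<noteq> - \<infinity>" using ge[of x] by (cases "?\<phi> x") auto
    qed
    show "convex (epi ?\<phi>)" using E P(2) by simp
  qed
  have sc: "?\<phi> (l *\<^sub>R x) \<le> ereal (l * m)" if "?\<phi> x = ereal m" "1 \<le> l" for x m l
  proof -
    have "(x,m) \<in> K" using that(1) E by (auto simp: epi_def)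
    hence "(l *\<^sub>R x, l * m) \<in> K" using P(6) that(2) by blast
    thus ?thesis using E by (auto simp: epi_def)
  qed
  have "\<forall>y\<in>ldom (legendre ?\<phi>). -1 \<le> legendre ?\<phi> y \<and> legendre ?\<phi> y \<le> 0"
    unfolding ldom_def using legendre_bounds[of ?\<phi>, OF ge phi0 sc] by blast
  hence "?\<phi> \<in> classF" unfolding classF_def using lsc cf phi0 ge by auto
  thus ?thesis using E T by blast
qed

theorem proposition5p3:
  shows "(\<forall>K\<in>(classS :: ('a::euclidean_space \<times> real) set set).
            epi (phiK K) = K \<and> polarT K = epi (Ttilde (phiK K)))
         \<and> bij_betw phiK (classS :: ('a::euclidean_space \<times> real) set set) classF"
proof
  show "\<forall>K\<in>(classS :: ('a::euclidean_space \<times> real) set set).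
            epi (phiK K) = K \<and> polarT K = epi (Ttilde (phiK K))"
    using classS_to_classF by blast
  show "bij_betw phiK (classS :: ('a::euclidean_space \<times> real) set set) classF"
    unfolding bij_betw_def
  proof
    show "inj_on phiK (classS :: ('a::euclidean_space \<times> real) set set)"
    proof (rule inj_onI)
      fix K1 K2 :: "('a \<times> real) set"
      assume "K1 \<in> classS" "K2 \<in> classS" "phiK K1 = phiK K2"
      thus "K1 = K2" using classS_to_classF by metis
    qed
    show "phiK ` (classS :: ('a::euclidean_space \<times> real) set set) = classF"
    proof
      show "phiK ` (classS :: ('a::euclidean_space \<times> real) set set) \<subseteq> classF"
        using classS_to_classF by blast
      show "classF \<subseteq> phiK ` (classS :: ('a::euclidean_space \<times> real) set set)"
      proof
        fix \<phi> :: "'a \<Rightarrow> ereal" assume F: "\<phi> \<in> classF"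
        have "\<And>x. \<phi> x \<noteq> -\<infinity>" using F unfolding classF_def convex_fun_def by auto
        hence "\<phi> = phiK (epi \<phi>)" using phiK_of_epi by metis
        moreover have "epi \<phi> \<in> classS" using classF_to_classS[OF F] .
        ultimately show "\<phi> \<in> phiK ` classS" by blast
      qed
    qed
  qed
qed

end
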